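(* Let $SG$ be a signed graph and $e,e'$ two distinct parallel edges of $SG$ with the same sign (parallel meaning they join the same pair of vertices, where the two endpoints may coincide, i.e. both may be loops at the same vertex). Then for all $i$, $H^i(SG)\cong H^i(SG-e')$ and $H^i_b(SG)\cong H^i_b(SG-e')$.
   Context: Signed graphs: $SG=(G,\sigma)$, $G$ finite (loops, multiple edges allowed), $\sigma:E(G)\to\{\pm1\}$; $SG-e'$ deletes $e'$. Negative circuit: product of edge signs $-1$ (a loop is a circuit of one edge); balanced = no negative circuit. $[G:s]$, $[SG:s]$: spanning subgraph with edge set $s$. Complexes: Fix a total order on $E(G)$. An enhanced state of $G$ is $S=(s,c)$, $c$ labels each component of $[G:s]$ by $1$ or $x$; $j(S)$ = number of $x$-labels (grading). With $m(1,1)=1$, $m(1,x)=m(x,1)=x$, $m(x,x)=0$: for $a\notin s$, $S_a=(s\cup\{a\},c_a)$ where a component containing both ends of $a$ keeps its label and if $a$ joins components $E_i,E_j$ the merged one gets $m(c(E_i),c(E_j))$ ($S_a=0$ if both are $x$). $d(S)=\sum_{a\notin s}(-1)^{n(a)}S_a$, $n(a)$ = number of edges of $s$ preceding $a$. $H^i(SG)$: cohomology of $C^\bullet(SG)$, free on enhanced states whose $c$ assigns $1$ to every unbalanced component of $[SG:s]$, differential $d_s=f\circ d$ with $f$ projecting onto these states. $H^i_b(SG)$: cohomology of $C^\bullet_b(SG)$, free on enhanced states with $[SG:s]$ balanced, differential $d_b=f_b\circ d$, $f_b$ the analogous projection. *)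

theory Defs
  imports "HOL-Algebra.Algebra"
begin

text \<open>A signed graph is given by a vertex set V, an edge set E, an endpoint map
  ends (ends e = {u,v}; a loop at u has ends e = {u}), and a sign map sigma with values 1 or -1.
  Multiple edges are allowed (distinct edges may have equal ends).
  The total order on edges is the order of the type 'e.\<close>

definition signed_graph :: "'v set \<Rightarrow> 'e set \<Rightarrow> ('e \<Rightarrow> 'v set) \<Rightarrow> ('e \<Rightarrow> int) \<Rightarrow> bool" where
  "signed_graph V E ends sigma \<longleftrightarrow> finite V \<and> finite E \<and>
     (\<forall>e\<in>E. ends e \<subseteq> V \<and> ends e \<noteq> {} \<and> card (ends e) \<le> 2) \<and>
     (\<forall>e\<in>E. sigma e = 1 \<or> sigma e = -1)"

definition adj :: "('e \<Rightarrow> 'v set) \<Rightarrow> 'e set \<Rightarrow> ('v \<times> 'v) set" where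
  "adj ends s = {(u, v). \<exists>e\<in>s. ends e = {u, v}}"

definition comps :: "'v set \<Rightarrow> ('e \<Rightarrow> 'v set) \<Rightarrow> 'e set \<Rightarrow> 'v set set" where
  "comps V ends s = V // ((adj ends s)\<^sup>*)"

text \<open>A circuit: distinct edges es = [e_0,...,e_(k-1)] (k >= 1) and distinct vertices
  vs = [v_0,...,v_(k-1)] with e_i joining v_i and v_(i+1 mod k). A loop is a circuit of one edge.\<close>
definition is_circuit :: "('e \<Rightarrow> 'v set) \<Rightarrow> 'e list \<Rightarrow> 'v list \<Rightarrow> bool" where
  "is_circuit ends es vs \<longleftrightarrow> es \<noteq> [] \<and> length vs = length es \<and> distinct es \<and> distinct vs \<and>
     (\<forall>k < length es. ends (es ! k) = {vs ! k, vs ! ((k + 1) mod length es)})"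

definition neg_circuit_in :: "('e \<Rightarrow> 'v set) \<Rightarrow> ('e \<Rightarrow> int) \<Rightarrow> 'e set \<Rightarrow> 'v set \<Rightarrow> bool" where
  "neg_circuit_in ends sigma s K \<longleftrightarrow>
     (\<exists>es vs. is_circuit ends es vs \<and> set es \<subseteq> s \<and> set vs \<subseteq> K \<and> prod_list (map sigma es) = -1)"

definition balanced_sub :: "('e \<Rightarrow> 'v set) \<Rightarrow> ('e \<Rightarrow> int) \<Rightarrow> 'e set \<Rightarrow> bool" where
  "balanced_sub ends sigma s \<longleftrightarrow> \<not> neg_circuit_in ends sigma s UNIV"

text \<open>Enhanced states S = (s, X): X is the set of components of [G:s] labelled x;
  all other components are labelled 1.\<close>
type_synonym ('e, 'v) estate = "'e set \<times> 'v set set"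

definition states :: "'v set \<Rightarrow> 'e set \<Rightarrow> ('e \<Rightarrow> 'v set) \<Rightarrow> ('e, 'v) estate set" where
  "states V E ends = {S. fst S \<subseteq> E \<and> snd S \<subseteq> comps V ends (fst S)}"

text \<open>S_a (None represents 0): a component of [G:s+a] is labelled x iff it contains an
  x-labelled component of [G:s]; S_a = 0 iff two x-labelled components get merged.
  This is exactly the rule with m(1,1)=1, m(1,x)=m(x,1)=x, m(x,x)=0.\<close>
definition succ_state :: "'v set \<Rightarrow> ('e \<Rightarrow> 'v set) \<Rightarrow> ('e, 'v) estate \<Rightarrow> 'e \<Rightarrow> ('e, 'v) estate option" where
  "succ_state V ends S a = (let s' = insert a (fst S) in
     if (\<exists>K'\<in>comps V ends s'. \<exists>K1\<in>snd S. \<exists>K2\<in>snd S. K1 \<noteq> K2 \<and> K1 \<subseteq> K' \<and> K2 \<subseteq> K')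
     then None
     else Some (s', {K' \<in> comps V ends s'. \<exists>K\<in>snd S. K \<subseteq> K'}))"

text \<open>Generic complex: P selects the admissible enhanced states (basis of the complex).\<close>
definition adm_states :: "'v set \<Rightarrow> 'e set \<Rightarrow> ('e \<Rightarrow> 'v set) \<Rightarrow> ('e set \<Rightarrow> 'v set set \<Rightarrow> bool)
    \<Rightarrow> ('e, 'v) estate set" where
  "adm_states V E ends P = {S \<in> states V E ends. P (fst S) (snd S)}"

definition basis :: "'v set \<Rightarrow> 'e set \<Rightarrow> ('e \<Rightarrow> 'v set) \<Rightarrow> ('e set \<Rightarrow> 'v set set \<Rightarrow> bool)
    \<Rightarrow> int \<Rightarrow> nat \<Rightarrow> ('e, 'v) estate set" where
  "basis V E ends P i j = {S \<in> adm_states V E ends P. int (card (fst S)) = i \<and> card (snd S) = j}"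

definition dcoef :: "'v set \<Rightarrow> 'e set \<Rightarrow> ('e \<Rightarrow> 'v set) \<Rightarrow> ('e::linorder, 'v) estate \<Rightarrow> ('e, 'v) estate \<Rightarrow> int" where
  "dcoef V E ends S T = (\<Sum>a\<in>E - fst S.
      if succ_state V ends S a = Some T then (-1) ^ card {b \<in> fst S. b < a} else 0)"

text \<open>Integer cochains are functions from enhanced states to int supported on the basis.
  The differential is d followed by the projection onto admissible states.\<close>
definition diff :: "'v set \<Rightarrow> 'e set \<Rightarrow> ('e \<Rightarrow> 'v set) \<Rightarrow> ('e set \<Rightarrow> 'v set set \<Rightarrow> bool)
    \<Rightarrow> (('e::linorder, 'v) estate \<Rightarrow> int) \<Rightarrow> (('e, 'v) estate \<Rightarrow> int)" where
  "diff V E ends P f = (\<lambda>T. if T \<in> adm_states V E ends P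
      then (\<Sum>S\<in>adm_states V E ends P. f S * dcoef V E ends S T) else 0)"

definition cochains :: "'v set \<Rightarrow> 'e set \<Rightarrow> ('e \<Rightarrow> 'v set) \<Rightarrow> ('e set \<Rightarrow> 'v set set \<Rightarrow> bool)
    \<Rightarrow> int \<Rightarrow> nat \<Rightarrow> (('e, 'v) estate \<Rightarrow> int) set" where
  "cochains V E ends P i j = {f. \<forall>S. f S \<noteq> 0 \<longrightarrow> S \<in> basis V E ends P i j}"

definition cochain_group :: "'v set \<Rightarrow> 'e set \<Rightarrow> ('e \<Rightarrow> 'v set) \<Rightarrow> ('e set \<Rightarrow> 'v set set \<Rightarrow> bool)
    \<Rightarrow> int \<Rightarrow> nat \<Rightarrow> (('e, 'v) estate \<Rightarrow> int) monoid" where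
  "cochain_group V E ends P i j =
     \<lparr>carrier = cochains V E ends P i j, monoid.mult = (\<lambda>f g S. f S + g S), one = (\<lambda>S. 0)\<rparr>"

definition cocycles :: "'v set \<Rightarrow> 'e set \<Rightarrow> ('e \<Rightarrow> 'v set) \<Rightarrow> ('e set \<Rightarrow> 'v set set \<Rightarrow> bool)
    \<Rightarrow> int \<Rightarrow> nat \<Rightarrow> (('e::linorder, 'v) estate \<Rightarrow> int) set" where
  "cocycles V E ends P i j = {f \<in> cochains V E ends P i j. diff V E ends P f = (\<lambda>S. 0)}"

definition coboundaries :: "'v set \<Rightarrow> 'e set \<Rightarrow> ('e \<Rightarrow> 'v set) \<Rightarrow> ('e set \<Rightarrow> 'v set set \<Rightarrow> bool)
    \<Rightarrow> int \<Rightarrow> nat \<Rightarrow> (('e::linorder, 'v) estate \<Rightarrow> int) set" where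
  "coboundaries V E ends P i j = diff V E ends P ` cochains V E ends P (i - 1) j"

definition cohom :: "'v set \<Rightarrow> 'e set \<Rightarrow> ('e \<Rightarrow> 'v set) \<Rightarrow> ('e set \<Rightarrow> 'v set set \<Rightarrow> bool)
    \<Rightarrow> int \<Rightarrow> nat \<Rightarrow> (('e::linorder, 'v) estate \<Rightarrow> int) set monoid" where
  "cohom V E ends P i j =
     (cochain_group V E ends P i j)\<lparr>carrier := cocycles V E ends P i j\<rparr> Mod coboundaries V E ends P i j"

text \<open>H^{i,j}(SG): admissible states label every unbalanced component of [SG:s] by 1.\<close>
definition H :: "'v set \<Rightarrow> 'e set \<Rightarrow> ('e \<Rightarrow> 'v set) \<Rightarrow> ('e \<Rightarrow> int) \<Rightarrow> int \<Rightarrow> nat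
    \<Rightarrow> (('e::linorder, 'v) estate \<Rightarrow> int) set monoid" where
  "H V E ends sigma i j = cohom V E ends (\<lambda>s L. \<forall>K\<in>L. \<not> neg_circuit_in ends sigma s K) i j"

definition Hb :: "'v set \<Rightarrow> 'e set \<Rightarrow> ('e \<Rightarrow> 'v set) \<Rightarrow> ('e \<Rightarrow> int) \<Rightarrow> int \<Rightarrow> nat
    \<Rightarrow> (('e::linorder, 'v) estate \<Rightarrow> int) set monoid" where
  "Hb V E ends sigma i j = cohom V E ends (\<lambda>s L. balanced_sub ends sigma s) i j"

end

theory Submission
  imports Defs
begin

lemma adj_sym: "sym (adj ends s)"
  unfolding adj_def sym_def by (auto simp: insert_commute)

lemma adj_mono: "s \<subseteq> s' \<Longrightarrow> adj ends s \<subseteq> adj ends s'"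
  unfolding adj_def by auto

lemma comps_iff: "K \<in> comps V ends s \<longleftrightarrow> (\<exists>x\<in>V. K = (adj ends s)\<^sup>* `` {x})"
  unfolding comps_def quotient_def by auto

lemma comps_ne: "K \<in> comps V ends s \<Longrightarrow> K \<noteq> {}"
  unfolding comps_iff by auto

lemma comps_mem: "L \<subseteq> comps V ends s \<Longrightarrow> K \<in> L \<Longrightarrow> \<exists>z. z \<in> K"
  using comps_ne by blast

lemma rt_class_eq:
  assumes "sym r" "z \<in> r\<^sup>* `` {x}" "z \<in> r\<^sup>* `` {y}"
  shows "r\<^sup>* `` {x} = r\<^sup>* `` {y}"
proof -
  have sr: "sym (r\<^sup>*)" using assms(1) by (rule sym_rtrancl)
  have xz: "(x,z) \<in> r\<^sup>*" and yz: "(y,z) \<in> r\<^sup>*" using assms by auto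
  then have zy: "(z,y) \<in> r\<^sup>*" using sr unfolding sym_def by blast
  have xy: "(x,y) \<in> r\<^sup>*" using xz zy by (rule rtrancl_trans)
  have yx: "(y,x) \<in> r\<^sup>*" using xy sr unfolding sym_def by blast
  show ?thesis
  proof
    show "r\<^sup>* `` {x} \<subseteq> r\<^sup>* `` {y}" using yx by (auto intro: rtrancl_trans)
    show "r\<^sup>* `` {y} \<subseteq> r\<^sup>* `` {x}" using xy by (auto intro: rtrancl_trans)
  qed
qed

lemma comps_disj:
  assumes "K1 \<in> comps V ends s" "K2 \<in> comps V ends s" "z \<in> K1" "z \<in> K2"
  shows "K1 = K2"
proof -
  obtain x where x: "K1 = (adj ends s)\<^sup>* `` {x}" using assms(1) unfolding comps_iff by blast
  obtain y where y: "K2 = (adj ends s)\<^sup>* `` {y}" using assms(2) unfolding comps_iff by blast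
  show ?thesis unfolding x y by (rule rt_class_eq[OF adj_sym]) (use assms x y in auto)
qed

lemma comps_refine:
  assumes "K \<in> comps V ends s" "s \<subseteq> s'"
  shows "\<exists>K'\<in>comps V ends s'. K \<subseteq> K'"
proof -
  obtain x where x: "x \<in> V" "K = (adj ends s)\<^sup>* `` {x}" using assms(1) unfolding comps_iff by blast
  have "(adj ends s)\<^sup>* `` {x} \<subseteq> (adj ends s')\<^sup>* `` {x}"
    by (rule Image_mono[OF rtrancl_mono[OF adj_mono[OF assms(2)]]]) simp
  moreover have "(adj ends s')\<^sup>* `` {x} \<in> comps V ends s'" unfolding comps_iff using x(1) by blast
  ultimately show ?thesis using x(2) by blast
qed

lemma comps_sub:
  assumes "K \<in> comps V ends s" "K' \<in> comps V ends s'" "s \<subseteq> s'" "z \<in> K" "z \<in> K'"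
  shows "K \<subseteq> K'"
proof -
  obtain K'' where k: "K'' \<in> comps V ends s'" "K \<subseteq> K''" using comps_refine[OF assms(1,3)] by blast
  have "z \<in> K''" using k(2) assms(4) by blast
  then have "K'' = K'" using comps_disj[OF k(1) assms(2)] assms(5) by blast
  then show ?thesis using k(2) by simp
qed

lemma comps_sub_eq:
  assumes "K1 \<in> comps V ends s" "K2 \<in> comps V ends s" "K1 \<subseteq> K2"
  shows "K1 = K2"
proof -
  from comps_ne[OF assms(1)] obtain z where z: "z \<in> K1" by blast
  then have "z \<in> K2" using assms(3) by blast
  then show ?thesis using comps_disj[OF assms(1,2) z] by blast
qed

definition bad :: "'v set \<Rightarrow> ('e \<Rightarrow> 'v set) \<Rightarrow> 'e set \<Rightarrow> 'v set set \<Rightarrow> bool" where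
  "bad V ends s L \<longleftrightarrow> (\<exists>K'\<in>comps V ends s. \<exists>K1\<in>L. \<exists>K2\<in>L. K1 \<noteq> K2 \<and> K1 \<subseteq> K' \<and> K2 \<subseteq> K')"

definition lift :: "'v set \<Rightarrow> ('e \<Rightarrow> 'v set) \<Rightarrow> 'e set \<Rightarrow> 'v set set \<Rightarrow> 'v set set" where
  "lift V ends s L = {K' \<in> comps V ends s. \<exists>K\<in>L. K \<subseteq> K'}"

lemma succ_state_eq: "succ_state V ends S a = (if bad V ends (insert a (fst S)) (snd S) then None
   else Some (insert a (fst S), lift V ends (insert a (fst S)) (snd S)))"
  unfolding succ_state_def bad_def lift_def Let_def by simp

lemma lift_lift:
  assumes "L \<subseteq> comps V ends s" "s \<subseteq> s1" "s1 \<subseteq> s2"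
  shows "lift V ends s2 (lift V ends s1 L) = lift V ends s2 L"
proof
  show "lift V ends s2 (lift V ends s1 L) \<subseteq> lift V ends s2 L"
    unfolding lift_def by blast
  show "lift V ends s2 L \<subseteq> lift V ends s2 (lift V ends s1 L)"
  proof
    fix K'' assume "K'' \<in> lift V ends s2 L"
    then obtain K where K: "K \<in> L" "K \<subseteq> K''" "K'' \<in> comps V ends s2" unfolding lift_def by blast
    have Kc: "K \<in> comps V ends s" using K(1) assms(1) by blast
    obtain K' where K': "K' \<in> comps V ends s1" "K \<subseteq> K'" using comps_refine[OF Kc assms(2)] by blast
    obtain z where z: "z \<in> K" using comps_mem[OF assms(1) K(1)] by blast
    have "K' \<subseteq> K''" by (rule comps_sub[OF K'(1) K(3) assms(3)]) (use z K(2) K'(2) in blast)+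
    then show "K'' \<in> lift V ends s2 (lift V ends s1 L)" unfolding lift_def using K K' by blast
  qed
qed

lemma bad_lift:
  assumes "L \<subseteq> comps V ends s" "s \<subseteq> s1" "s1 \<subseteq> s2"
  shows "(bad V ends s1 L \<or> bad V ends s2 (lift V ends s1 L)) \<longleftrightarrow> bad V ends s2 L"
proof
  assume "bad V ends s1 L \<or> bad V ends s2 (lift V ends s1 L)"
  then show "bad V ends s2 L"
  proof
    assume "bad V ends s1 L"
    then obtain K' K1 K2 where k: "K' \<in> comps V ends s1" "K1 \<in> L" "K2 \<in> L" "K1 \<noteq> K2" "K1 \<subseteq> K'" "K2 \<subseteq> K'"
      unfolding bad_def by blast
    obtain K'' where kk: "K'' \<in> comps V ends s2" "K' \<subseteq> K''" using comps_refine[OF k(1) assms(3)] by blast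
    have "K1 \<subseteq> K''" "K2 \<subseteq> K''" using kk(2) k(5,6) by auto
    then show ?thesis unfolding bad_def using k(2,3,4) kk(1) by blast
  next
    assume "bad V ends s2 (lift V ends s1 L)"
    then obtain K'' K1' K2' where k: "K'' \<in> comps V ends s2" "K1' \<in> lift V ends s1 L" "K2' \<in> lift V ends s1 L"
      "K1' \<noteq> K2'" "K1' \<subseteq> K''" "K2' \<subseteq> K''"
      unfolding bad_def by blast
    obtain K1 K2 where kk: "K1 \<in> L" "K2 \<in> L" "K1 \<subseteq> K1'" "K2 \<subseteq> K2'" "K1' \<in> comps V ends s1" "K2' \<in> comps V ends s1"
      using k(2,3) unfolding lift_def by blast
    have "K1 \<noteq> K2"
    proof
      assume "K1 = K2"
      obtain z where z: "z \<in> K1" using comps_mem[OF assms(1) kk(1)] by blast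
      have "z \<in> K1'" using z kk(3) by blast
      moreover have "z \<in> K2'" using z kk(4) \<open>K1 = K2\<close> by blast
      ultimately have "K1' = K2'" by (rule comps_disj[OF kk(5,6)])
      then show False using k(4) by simp
    qed
    moreover have "K1 \<subseteq> K''" "K2 \<subseteq> K''" using kk(3,4) k(5,6) by auto
    ultimately show ?thesis unfolding bad_def using k(1) kk(1,2) by blast
  qed
next
  assume "bad V ends s2 L"
  then obtain K'' K1 K2 where k: "K'' \<in> comps V ends s2" "K1 \<in> L" "K2 \<in> L" "K1 \<noteq> K2" "K1 \<subseteq> K''" "K2 \<subseteq> K''"
    unfolding bad_def by blast
  have c1: "K1 \<in> comps V ends s" "K2 \<in> comps V ends s" using k(2,3) assms(1) by blast+
  obtain K1' where k1: "K1' \<in> comps V ends s1" "K1 \<subseteq> K1'" using comps_refine[OF c1(1) assms(2)] by blast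
  obtain K2' where k2: "K2' \<in> comps V ends s1" "K2 \<subseteq> K2'" using comps_refine[OF c1(2) assms(2)] by blast
  obtain z1 where z1: "z1 \<in> K1" using comps_mem[OF assms(1) k(2)] by blast
  obtain z2 where z2: "z2 \<in> K2" using comps_mem[OF assms(1) k(3)] by blast
  have s1: "K1' \<subseteq> K''" by (rule comps_sub[OF k1(1) k(1) assms(3)]) (use z1 k(5) k1(2) in blast)+
  have s2: "K2' \<subseteq> K''" by (rule comps_sub[OF k2(1) k(1) assms(3)]) (use z2 k(6) k2(2) in blast)+
  show "bad V ends s1 L \<or> bad V ends s2 (lift V ends s1 L)"
  proof (cases "K1' = K2'")
    case True
    then have "K2 \<subseteq> K1'" using k2(2) by simp
    then have "bad V ends s1 L" unfolding bad_def using k(2,3,4) k1 by blast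
    then show ?thesis by simp
  next
    case False
    have "K1' \<in> lift V ends s1 L" "K2' \<in> lift V ends s1 L" unfolding lift_def using k1 k2 k(2,3) by blast+
    then have "bad V ends s2 (lift V ends s1 L)" unfolding bad_def using False s1 s2 k(1) by blast
    then show ?thesis by simp
  qed
qed

definition two_step where
  "two_step V ends S a b U \<longleftrightarrow> (\<exists>T. succ_state V ends S a = Some T \<and> succ_state V ends T b = Some U)"

lemma two_step_char:
  assumes "snd S \<subseteq> comps V ends (fst S)"
  shows "two_step V ends S a b U \<longleftrightarrow> \<not> bad V ends (insert b (insert a (fst S))) (snd S) \<and>
     U = (insert b (insert a (fst S)), lift V ends (insert b (insert a (fst S))) (snd S))"
proof -
  let ?s = "fst S" let ?L = "snd S" let ?s1 = "insert a ?s" let ?s2 = "insert b ?s1"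
  have l: "lift V ends ?s2 (lift V ends ?s1 ?L) = lift V ends ?s2 ?L"
    by (rule lift_lift[OF assms]) auto
  have b: "(bad V ends ?s1 ?L \<or> bad V ends ?s2 (lift V ends ?s1 ?L)) \<longleftrightarrow> bad V ends ?s2 ?L"
    by (rule bad_lift[OF assms]) auto
  show ?thesis unfolding two_step_def succ_state_eq using l b by auto
qed

lemma two_step_swap:
  assumes "snd S \<subseteq> comps V ends (fst S)"
  shows "two_step V ends S a b U \<longleftrightarrow> two_step V ends S b a U"
  unfolding two_step_char[OF assms] by (simp add: insert_commute)

lemma card_lift:
  assumes "L \<subseteq> comps V ends s" "s \<subseteq> s'" "\<not> bad V ends s' L"
  shows "card (lift V ends s' L) = card L"
proof -
  define g where "g K = (SOME K'. K' \<in> comps V ends s' \<and> K \<subseteq> K')" for K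
  have g: "g K \<in> comps V ends s' \<and> K \<subseteq> g K" if "K \<in> L" for K
    unfolding g_def by (rule someI_ex) (use comps_refine[OF _ assms(2)] assms(1) that in blast)
  have inj: "inj_on g L"
  proof (rule inj_onI)
    fix K1 K2 assume "K1 \<in> L" "K2 \<in> L" "g K1 = g K2"
    then show "K1 = K2" using g assms(3) unfolding bad_def by metis
  qed
  have im: "g ` L = lift V ends s' L"
  proof
    show "g ` L \<subseteq> lift V ends s' L" unfolding lift_def using g by blast
    show "lift V ends s' L \<subseteq> g ` L"
    proof
      fix K' assume "K' \<in> lift V ends s' L"
      then obtain K where K: "K \<in> L" "K \<subseteq> K'" "K' \<in> comps V ends s'" unfolding lift_def by blast
      obtain z where "z \<in> K" using comps_mem[OF assms(1) K(1)] by blast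
      then have "K' = g K" using comps_disj[of K' V ends s' "g K" z] g K by blast
      then show "K' \<in> g ` L" using K by blast
    qed
  qed
  show ?thesis using card_image[OF inj] im by simp
qed



definition esgn :: "'e::linorder set \<Rightarrow> 'e \<Rightarrow> int" where
  "esgn s a = (-1) ^ card {b \<in> s. b < a}"

lemma succ_fst: "succ_state V ends S a = Some T \<Longrightarrow> fst T = insert a (fst S)"
  unfolding succ_state_eq by (auto split: if_splits)

lemma succ_snd: "succ_state V ends S a = Some T \<Longrightarrow> snd T = lift V ends (insert a (fst S)) (snd S)"
  unfolding succ_state_eq by (auto split: if_splits)

lemma succ_notbad: "succ_state V ends S a = Some T \<Longrightarrow> \<not> bad V ends (insert a (fst S)) (snd S)"
  unfolding succ_state_eq by (auto split: if_splits)

lemma dcoef_some: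
  assumes "finite E" "a \<in> E - fst S" "succ_state V ends S a = Some T"
  shows "dcoef V E ends S T = esgn (fst S) a"
proof -
  have "dcoef V E ends S T = (\<Sum>a'\<in>{a}. if succ_state V ends S a' = Some T then (-1) ^ card {b \<in> fst S. b < a'} else 0)"
    unfolding dcoef_def
  proof (rule sum.mono_neutral_right)
    show "finite (E - fst S)" using assms(1) by simp
    show "{a} \<subseteq> E - fst S" using assms(2) by simp
    show "\<forall>i\<in>E - fst S - {a}. (if succ_state V ends S i = Some T then (- 1) ^ card {b \<in> fst S. b < i} else 0) = (0::int)"
    proof
      fix i assume i: "i \<in> E - fst S - {a}"
      show "(if succ_state V ends S i = Some T then (- 1) ^ card {b \<in> fst S. b < i} else 0) = (0::int)"
      proof (cases "succ_state V ends S i = Some T")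
        case True
        then have "insert i (fst S) = insert a (fst S)" using succ_fst assms(3) by metis
        then have "i = a" using i assms(2) by blast
        then show ?thesis using i by simp
      qed simp
    qed
  qed
  then show ?thesis using assms(3) by (simp add: esgn_def)
qed

lemma dcoef_nz:
  assumes "dcoef V E ends S T \<noteq> 0"
  shows "\<exists>a\<in>E - fst S. succ_state V ends S a = Some T"
proof (rule ccontr)
  assume "\<not> ?thesis"
  then have "dcoef V E ends S T = 0" unfolding dcoef_def by (intro sum.neutral) auto
  then show False using assms by simp
qed

lemma card_ins_less:
  assumes "finite s" "a \<notin> s"
  shows "card {x \<in> insert a s. x < b} = card {x \<in> s. x < b} + (if a < b then 1 else 0)"
proof (cases "a < b")
  case True
  then have "{x \<in> insert a s. x < b} = insert a {x \<in> s. x < b}" by auto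
  then show ?thesis using True assms by simp
next
  case False
  then have "{x \<in> insert a s. x < b} = {x \<in> s. x < b}" by auto
  then show ?thesis using False by simp
qed

lemma esgn_swap:
  fixes a b :: "'e::linorder"
  assumes "finite s" "a \<notin> s" "b \<notin> s" "a \<noteq> b"
  shows "esgn s a * esgn (insert a s) b + esgn s b * esgn (insert b s) a = 0"
proof -
  let ?n = "card {x \<in> s. x < a}" and ?m = "card {x \<in> s. x < b}"
  have 1: "esgn (insert a s) b = (-1)^?m * (-1)^(if a < b then 1 else 0)"
    unfolding esgn_def card_ins_less[OF assms(1,2)] by (simp add: power_add)
  have 2: "esgn (insert b s) a = (-1)^?n * (-1)^(if b < a then 1 else 0)"
    unfolding esgn_def card_ins_less[OF assms(1,3)] by (simp add: power_add)
  show ?thesis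
  proof (cases "a < b")
    case True
    then have "\<not> b < a" by simp
    then show ?thesis unfolding 1 2 using True by (simp add: esgn_def)
  next
    case False
    then have "b < a" using assms(4) by simp
    then show ?thesis unfolding 1 2 using False by (simp add: esgn_def)
  qed
qed

lemma finite_comps: "finite V \<Longrightarrow> finite (comps V ends s)"
  unfolding comps_def quotient_def by simp

lemma finite_states:
  assumes "finite V" "finite E"
  shows "finite (states V E ends)"
proof -
  have "states V E ends \<subseteq> Pow E \<times> Pow (\<Union>s\<in>Pow E. comps V ends s)"
    unfolding states_def by (auto; blast)
  moreover have "finite (Pow E \<times> Pow (\<Union>s\<in>Pow E. comps V ends s))"
  proof (rule finite_cartesian_product)
    show "finite (Pow E)" using assms(2) by simp
    have "finite (\<Union>s\<in>Pow E. comps V ends s)"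
      by (rule finite_UN_I) (use assms finite_comps in auto)
    then show "finite (Pow (\<Union>s\<in>Pow E. comps V ends s))" by simp
  qed
  ultimately show ?thesis by (rule finite_subset)
qed

locale cx =
  fixes V :: "'v set" and E :: "'e::linorder set" and ends :: "'e \<Rightarrow> 'v set"
    and P :: "'e set \<Rightarrow> 'v set set \<Rightarrow> bool"
  assumes finV: "finite V" and finE: "finite E"
    and P1: "\<And>s L a T. L \<subseteq> comps V ends s \<Longrightarrow> \<not> P s L \<Longrightarrow> a \<notin> s \<Longrightarrow>
        succ_state V ends (s, L) a = Some T \<Longrightarrow> \<not> P (fst T) (snd T)"
begin

abbreviation "A \<equiv> adm_states V E ends P"
abbreviation "dc \<equiv> dcoef V E ends"
abbreviation "D \<equiv> diff V E ends P"

lemma finA: "finite A"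
  unfolding adm_states_def using finite_states[OF finV finE] by simp

lemma A_iff: "S \<in> A \<longleftrightarrow> fst S \<subseteq> E \<and> snd S \<subseteq> comps V ends (fst S) \<and> P (fst S) (snd S)"
  unfolding adm_states_def states_def by auto

lemma finS: "S \<in> A \<Longrightarrow> finite (fst S)"
  using A_iff finE finite_subset by blast

lemma succ_states:
  assumes "succ_state V ends S a = Some T" "fst S \<subseteq> E" "a \<in> E"
  shows "fst T \<subseteq> E \<and> snd T \<subseteq> comps V ends (fst T)"
  using succ_fst[OF assms(1)] succ_snd[OF assms(1)] assms(2,3) unfolding lift_def by auto

lemma succ_adm_back:
  assumes "succ_state V ends S a = Some T" "S \<in> states V E ends" "a \<notin> fst S" "P (fst T) (snd T)"
  shows "P (fst S) (snd S)"
proof (rule ccontr)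
  assume "\<not> P (fst S) (snd S)"
  moreover have "snd S \<subseteq> comps V ends (fst S)" using assms(2) unfolding states_def by auto
  ultimately have "\<not> P (fst T) (snd T)" using P1[of "snd S" "fst S" a T] assms(1,3) by simp
  then show False using assms(4) by simp
qed

lemma dd_coef:
  assumes S: "S \<in> A" and U: "U \<in> A"
  shows "(\<Sum>T\<in>A. dc S T * dc T U) = 0"
proof (cases "\<exists>T\<in>A. dc S T * dc T U \<noteq> 0")
  case False
  then show ?thesis by (intro sum.neutral) auto
next
  case True
  then obtain T1 where T1: "T1 \<in> A" "dc S T1 \<noteq> 0" "dc T1 U \<noteq> 0" by auto
  obtain a where a: "a \<in> E - fst S" "succ_state V ends S a = Some T1" using dcoef_nz[OF T1(2)] by blast
  obtain b where b: "b \<in> E - fst T1" "succ_state V ends T1 b = Some U" using dcoef_nz[OF T1(3)] by blast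
  have ft1: "fst T1 = insert a (fst S)" using succ_fst[OF a(2)] .
  have ab: "a \<noteq> b" "b \<notin> fst S" using b(1) ft1 by auto
  have Sc: "snd S \<subseteq> comps V ends (fst S)" using S A_iff by blast
  have "two_step V ends S a b U" unfolding two_step_def using a b by blast
  then have "two_step V ends S b a U" using two_step_swap[OF Sc] by blast
  then obtain T2 where T2: "succ_state V ends S b = Some T2" "succ_state V ends T2 a = Some U"
    unfolding two_step_def by blast
  have ft2: "fst T2 = insert b (fst S)" using succ_fst[OF T2(1)] .
  have fu: "fst U = insert b (insert a (fst S))" using succ_fst[OF b(2)] ft1 by simp
  have T2st: "fst T2 \<subseteq> E \<and> snd T2 \<subseteq> comps V ends (fst T2)"
    using succ_states[OF T2(1)] S A_iff b(1) by blast
  have "P (fst T2) (snd T2)"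
    using succ_adm_back[OF T2(2)] T2st U A_iff ft2 ab a(1) unfolding states_def by auto
  then have T2A: "T2 \<in> A" using T2st A_iff by blast
  have finSs: "finite (fst S)" using finS[OF S] .
  have c1: "dc S T1 = esgn (fst S) a" using dcoef_some[OF finE a(1) a(2)] .
  have c2: "dc T1 U = esgn (insert a (fst S)) b" using dcoef_some[OF finE b(1) b(2)] ft1 by simp
  have c3: "dc S T2 = esgn (fst S) b" using dcoef_some[OF finE _ T2(1)] ab b(1) by simp
  have c4: "dc T2 U = esgn (insert b (fst S)) a" using dcoef_some[OF finE _ T2(2)] ab a(1) ft2 by simp
  have neq: "T1 \<noteq> T2" using ft1 ft2 ab a(1) by auto
  have "(\<Sum>T\<in>A. dc S T * dc T U) = (\<Sum>T\<in>{T1,T2}. dc S T * dc T U)"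
  proof (rule sum.mono_neutral_right[OF finA])
    show "{T1, T2} \<subseteq> A" using T1(1) T2A by simp
    show "\<forall>T\<in>A - {T1, T2}. dc S T * dc T U = 0"
    proof
      fix T assume T: "T \<in> A - {T1, T2}"
      show "dc S T * dc T U = 0"
      proof (rule ccontr)
        assume "dc S T * dc T U \<noteq> 0"
        then have n: "dc S T \<noteq> 0" "dc T U \<noteq> 0" by auto
        obtain c where c: "c \<in> E - fst S" "succ_state V ends S c = Some T" using dcoef_nz[OF n(1)] by blast
        obtain d where d: "d \<in> E - fst T" "succ_state V ends T d = Some U" using dcoef_nz[OF n(2)] by blast
        have "fst U = insert d (insert c (fst S))" using succ_fst[OF d(2)] succ_fst[OF c(2)] by simp
        then have "c = a \<or> c = b" using fu c(1) by auto
        then show False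
        proof
          assume "c = a" then have "T = T1" using c(2) a(2) by simp
          then show False using T by simp
        next
          assume "c = b" then have "T = T2" using c(2) T2(1) by simp
          then show False using T by simp
        qed
      qed
    qed
  qed
  also have "\<dots> = dc S T1 * dc T1 U + dc S T2 * dc T2 U" using neq by simp
  also have "\<dots> = 0" unfolding c1 c2 c3 c4 using esgn_swap[OF finSs _ ab(2) ab(1)] a(1) by simp
  finally show ?thesis .
qed

lemma DD: "D (D f) = (\<lambda>U. 0)"
proof
  fix U
  show "D (D f) U = 0"
  proof (cases "U \<in> A")
    case False then show ?thesis unfolding diff_def by simp
  next
    case True
    have "D (D f) U = (\<Sum>T\<in>A. (\<Sum>S\<in>A. f S * dc S T) * dc T U)"
      unfolding diff_def using True by (auto intro!: sum.cong)
    also have "\<dots> = (\<Sum>T\<in>A. \<Sum>S\<in>A. f S * (dc S T * dc T U))"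
      by (simp add: sum_distrib_right mult.assoc)
    also have "\<dots> = (\<Sum>S\<in>A. \<Sum>T\<in>A. f S * (dc S T * dc T U))"
      by (rule sum.swap)
    also have "\<dots> = (\<Sum>S\<in>A. f S * (\<Sum>T\<in>A. dc S T * dc T U))"
      by (simp add: sum_distrib_left)
    also have "\<dots> = 0" using dd_coef True by simp
    finally show ?thesis .
  qed
qed

end


context cx begin

lemma D_add: "D (\<lambda>S. f S + g S) = (\<lambda>T. D f T + D g T)"
  unfolding diff_def by (auto simp: sum.distrib distrib_right)

lemma D_neg: "D (\<lambda>S. - f S) = (\<lambda>T. - D f T)"
  unfolding diff_def by (auto simp: sum_negf)

lemma D_zero: "D (\<lambda>S. 0) = (\<lambda>S. 0)"
  unfolding diff_def by auto

lemma D_diff: "D (\<lambda>S. f S - g S) = (\<lambda>T. D f T - D g T)"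
  unfolding diff_def by (auto simp: sum_subtractf left_diff_distrib)

lemma sum_nz: "(\<Sum>x\<in>Y. h x) \<noteq> (0::int) \<Longrightarrow> \<exists>x\<in>Y. h x \<noteq> 0"
  by (meson sum.neutral)

lemma D_cochains:
  assumes f: "f \<in> cochains V E ends P (i - 1) j"
  shows "D f \<in> cochains V E ends P i j"
  unfolding cochains_def mem_Collect_eq
proof (intro allI impI)
  fix T assume nz: "D f T \<noteq> 0"
  then have TA: "T \<in> A" unfolding diff_def by (auto split: if_splits)
  then have "(\<Sum>S\<in>A. f S * dc S T) \<noteq> 0" using nz unfolding diff_def by simp
  then obtain S where S: "S \<in> A" "f S * dc S T \<noteq> 0" using sum_nz by blast
  then have fS: "f S \<noteq> 0" and dS: "dc S T \<noteq> 0" by auto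
  have Sb: "S \<in> basis V E ends P (i - 1) j" using f fS unfolding cochains_def by blast
  obtain a where a: "a \<in> E - fst S" "succ_state V ends S a = Some T" using dcoef_nz[OF dS] by blast
  have c1: "card (fst T) = card (fst S) + 1" using succ_fst[OF a(2)] a(1) finS[OF S(1)] by simp
  have Sc: "snd S \<subseteq> comps V ends (fst S)" using S(1) A_iff by blast
  have c2: "card (snd T) = card (snd S)"
    using succ_snd[OF a(2)] card_lift[OF Sc _ succ_notbad[OF a(2)]] by auto
  show "T \<in> basis V E ends P i j"
    using TA Sb c1 c2 unfolding basis_def by auto
qed

abbreviation "Zg i j \<equiv> (cochain_group V E ends P i j)\<lparr>carrier := cocycles V E ends P i j\<rparr>"

lemma cg_simps [simp]:
  "monoid.mult (cochain_group V E ends P i j) = (\<lambda>f g S. f S + g S)"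
  "monoid.one (cochain_group V E ends P i j) = (\<lambda>S. 0)"
  unfolding cochain_group_def by simp_all

lemma Zg_simps [simp]:
  "carrier (Zg i j) = cocycles V E ends P i j"
  "monoid.mult (Zg i j) = (\<lambda>f g S. f S + g S)"
  "monoid.one (Zg i j) = (\<lambda>S. 0)"
  unfolding cochain_group_def by simp_all

lemma cochains_add: "f \<in> cochains V E ends P i j \<Longrightarrow> g \<in> cochains V E ends P i j \<Longrightarrow>
   (\<lambda>S. f S + g S) \<in> cochains V E ends P i j"
  unfolding cochains_def mem_Collect_eq
proof (intro allI impI)
  fix S assume "\<forall>S. f S \<noteq> 0 \<longrightarrow> S \<in> basis V E ends P i j" "\<forall>S. g S \<noteq> 0 \<longrightarrow> S \<in> basis V E ends P i j"
    "f S + g S \<noteq> 0"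
  moreover then have "f S \<noteq> 0 \<or> g S \<noteq> 0" by auto
  ultimately show "S \<in> basis V E ends P i j" by blast
qed

lemma cochains_neg: "f \<in> cochains V E ends P i j \<Longrightarrow> (\<lambda>S. - f S) \<in> cochains V E ends P i j"
  unfolding cochains_def by auto

lemma cochains_zero: "(\<lambda>S. 0) \<in> cochains V E ends P i j"
  unfolding cochains_def by auto

lemma Zg_comm: "comm_group (Zg i j)"
proof (rule comm_groupI)
  fix x y assume "x \<in> carrier (Zg i j)" "y \<in> carrier (Zg i j)"
  then show "x \<otimes>\<^bsub>Zg i j\<^esub> y \<in> carrier (Zg i j)"
    unfolding cocycles_def by (auto simp: D_add cochains_add)
next
  show "\<one>\<^bsub>Zg i j\<^esub> \<in> carrier (Zg i j)" unfolding cocycles_def by (auto simp: D_zero cochains_zero)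
next
  fix x y z show "x \<otimes>\<^bsub>Zg i j\<^esub> y \<otimes>\<^bsub>Zg i j\<^esub> z = x \<otimes>\<^bsub>Zg i j\<^esub> (y \<otimes>\<^bsub>Zg i j\<^esub> z)" by (simp add: add.assoc)
next
  fix x y show "x \<otimes>\<^bsub>Zg i j\<^esub> y = y \<otimes>\<^bsub>Zg i j\<^esub> x" by (simp add: add.commute)
next
  fix x show "\<one>\<^bsub>Zg i j\<^esub> \<otimes>\<^bsub>Zg i j\<^esub> x = x" by simp
next
  fix x assume x: "x \<in> carrier (Zg i j)"
  show "\<exists>y\<in>carrier (Zg i j). y \<otimes>\<^bsub>Zg i j\<^esub> x = \<one>\<^bsub>Zg i j\<^esub>"
  proof (rule bexI[of _ "\<lambda>S. - x S"])
    show "(\<lambda>S. - x S) \<in> carrier (Zg i j)" using x unfolding cocycles_def by (auto simp: D_neg cochains_neg)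
  qed simp
qed

lemma Zg_inv: "x \<in> carrier (Zg i j) \<Longrightarrow> inv\<^bsub>Zg i j\<^esub> x = (\<lambda>S. - x S)"
proof -
  assume x: "x \<in> carrier (Zg i j)"
  interpret comm_group "Zg i j" by (rule Zg_comm)
  have "(\<lambda>S. - x S) \<in> carrier (Zg i j)" using x unfolding cocycles_def by (auto simp: D_neg cochains_neg)
  then show ?thesis by (intro inv_equality) (use x in simp_all)
qed

lemma B_sub: "coboundaries V E ends P i j \<subseteq> cocycles V E ends P i j"
proof
  fix x assume "x \<in> coboundaries V E ends P i j"
  then obtain f where f: "f \<in> cochains V E ends P (i - 1) j" "x = D f" unfolding coboundaries_def by blast
  show "x \<in> cocycles V E ends P i j" unfolding cocycles_def f(2) using D_cochains[OF f(1)] DD[of f] by blast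
qed

lemma B_subgroup: "subgroup (coboundaries V E ends P i j) (Zg i j)"
proof -
  interpret comm_group "Zg i j" by (rule Zg_comm)
  show ?thesis
  proof (rule subgroupI)
    show "coboundaries V E ends P i j \<subseteq> carrier (Zg i j)" using B_sub by simp
    show "coboundaries V E ends P i j \<noteq> {}" unfolding coboundaries_def using cochains_zero[of "i - 1" j] by blast
  next
    fix a assume a: "a \<in> coboundaries V E ends P i j"
    then obtain f where f: "f \<in> cochains V E ends P (i - 1) j" "a = D f" unfolding coboundaries_def by blast
    have ac: "a \<in> carrier (Zg i j)" using a B_sub by auto
    have "inv\<^bsub>Zg i j\<^esub> a = (\<lambda>S. - a S)" by (rule Zg_inv[OF ac])
    also have "\<dots> = D (\<lambda>S. - f S)" unfolding f(2) D_neg ..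
    finally show "inv\<^bsub>Zg i j\<^esub> a \<in> coboundaries V E ends P i j"
      unfolding coboundaries_def using cochains_neg[OF f(1)] by blast
  next
    fix a b assume "a \<in> coboundaries V E ends P i j" "b \<in> coboundaries V E ends P i j"
    then obtain f g where f: "f \<in> cochains V E ends P (i - 1) j" "a = D f"
      and g: "g \<in> cochains V E ends P (i - 1) j" "b = D g" unfolding coboundaries_def by blast
    have "a \<otimes>\<^bsub>Zg i j\<^esub> b = D (\<lambda>S. f S + g S)" unfolding f(2) g(2) D_add by simp
    then show "a \<otimes>\<^bsub>Zg i j\<^esub> b \<in> coboundaries V E ends P i j"
      unfolding coboundaries_def using cochains_add[OF f(1) g(1)] by blast
  qed
qed

lemma B_normal: "coboundaries V E ends P i j \<lhd> Zg i j"
  using comm_group.subgroup_imp_normal[OF Zg_comm B_subgroup] .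

lemma cohom_group: "group (cohom V E ends P i j)"
  unfolding cohom_def using normal.factorgroup_is_group[OF B_normal] .

end


lemma esgn_sq: "esgn s a * esgn s a = 1"
  unfolding esgn_def by (simp flip: power_mult_distrib)

lemma lift_same: "L \<subseteq> comps V ends s \<Longrightarrow> lift V ends s L = L"
  unfolding lift_def using comps_sub_eq by blast

lemma notbad_same: "L \<subseteq> comps V ends s \<Longrightarrow> \<not> bad V ends s L"
  unfolding bad_def using comps_sub_eq by (metis subsetD)

lemma sgn_rel:
  fixes a e :: "'e::linorder"
  assumes "finite s" "a \<notin> s" "e \<notin> s" "a \<noteq> e"
  shows "esgn s e * esgn s a = - (esgn (insert a s) e * esgn (insert e s) a)"
proof -
  have sw: "esgn s e * esgn (insert e s) a + esgn s a * esgn (insert a s) e = 0"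
    using esgn_swap[OF assms(1,3,2)] assms(4) by simp
  have "esgn s e * esgn s a = esgn s e * esgn s a * (esgn (insert e s) a * esgn (insert e s) a)"
    by (simp only: esgn_sq mult_1_right)
  also have "\<dots> = esgn s a * esgn (insert e s) a * (esgn s e * esgn (insert e s) a)"
    by (simp add: algebra_simps)
  also have "\<dots> = esgn s a * esgn (insert e s) a * (- (esgn s a * esgn (insert a s) e))"
  proof -
    have sw': "esgn s e * esgn (insert e s) a = - (esgn s a * esgn (insert a s) e)"
      using sw by (simp add: eq_neg_iff_add_eq_0)
    show ?thesis by (simp only: sw')
  qed
  also have "\<dots> = - (esgn s a * esgn s a) * (esgn (insert a s) e * esgn (insert e s) a)"
    by (simp add: algebra_simps)
  also have "\<dots> = - (esgn (insert a s) e * esgn (insert e s) a)" by (simp only: esgn_sq)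
  finally show ?thesis .
qed

definition addE :: "'a \<Rightarrow> 'a set \<times> 'b \<Rightarrow> 'a set \<times> 'b" where
  "addE x S = (insert x (fst S), snd S)"

locale par = cx +
  fixes e e'
  assumes eE: "e \<in> E" and e'E: "e' \<in> E" and ee: "e \<noteq> e'" and ends_eq: "ends e = ends e'"
    and P2: "\<And>s L. e' \<in> s \<Longrightarrow> P (insert e s) L = P s L"
begin

lemma adj_par: "e' \<in> s \<Longrightarrow> adj ends (insert e s) = adj ends s"
  unfolding adj_def using ends_eq by auto

lemma comps_par: "e' \<in> s \<Longrightarrow> comps V ends (insert e s) = comps V ends s"
  unfolding comps_def using adj_par by simp

lemma succ_par:
  assumes "e' \<in> s"
  shows "succ_state V ends (insert e s, L) a =
     map_option (\<lambda>T. (insert e (fst T), snd T)) (succ_state V ends (s, L) a)"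
proof -
  have c: "comps V ends (insert a (insert e s)) = comps V ends (insert a s)"
    using comps_par[of "insert a s"] assms by (simp add: insert_commute)
  have b: "bad V ends (insert a (insert e s)) L = bad V ends (insert a s) L"
    unfolding bad_def c ..
  have l: "lift V ends (insert a (insert e s)) L = lift V ends (insert a s) L"
    unfolding lift_def c ..
  show ?thesis unfolding succ_state_eq using b l by (simp add: insert_commute)
qed

lemma succ_par': "e' \<in> s \<Longrightarrow> succ_state V ends (s, L) a = Some T \<Longrightarrow>
   succ_state V ends (insert e s, L) a = Some (insert e (fst T), snd T)"
  using succ_par by simp

definition ycon :: "(('b set \<times> 'a set set) \<Rightarrow> int) \<Rightarrow> ('b set \<times> 'a set set) \<Rightarrow> int" where
  "ycon w S = (if S \<in> A \<and> e' \<in> fst S \<and> e \<notin> fst S then esgn (fst S) e * w (addE e S) else 0)"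

lemma gA: "S \<in> A \<Longrightarrow> e' \<in> fst S \<Longrightarrow> addE e S \<in> A"
  using P2 eE comps_par unfolding A_iff addE_def by auto

lemma ycon_c:
  assumes w: "w \<in> cochains V E ends P i j"
  shows "ycon w \<in> cochains V E ends P (i - 1) j"
  unfolding cochains_def mem_Collect_eq
proof (intro allI impI)
  fix S assume "ycon w S \<noteq> 0"
  then have S: "S \<in> A" "e' \<in> fst S" "e \<notin> fst S" "w (addE e S) \<noteq> 0" unfolding ycon_def by (auto split: if_splits)
  have gb: "addE e S \<in> basis V E ends P i j" using w S(4) unfolding cochains_def by blast
  have "card (fst (addE e S)) = card (fst S) + 1" unfolding addE_def using finS[OF S(1)] S(3) by simp
  then have "int (card (fst S)) = i - 1" using gb unfolding basis_def by simp
  moreover have "card (snd S) = j" using gb unfolding basis_def addE_def by simp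
  ultimately show "S \<in> basis V E ends P (i - 1) j" using S(1) unfolding basis_def by simp
qed

lemma ycon0: "e' \<notin> fst S \<Longrightarrow> ycon w S = 0"
  unfolding ycon_def by auto

lemma acyc_notA:
  assumes w: "w \<in> cochains V E ends P i j" and T: "T \<notin> A"
  shows "D (ycon w) T = w T"
proof -
  have "w T = 0" using w T unfolding cochains_def basis_def by blast
  then show ?thesis using T unfolding diff_def by simp
qed

lemma acyc_note':
  assumes w0: "\<forall>S. e' \<notin> fst S \<longrightarrow> w S = 0" and TA: "T \<in> A" and e'T: "e' \<notin> fst T"
  shows "D (ycon w) T = w T"
proof -
  have "(\<Sum>S\<in>A. ycon w S * dc S T) = 0"
  proof (rule sum.neutral, rule ballI)
    fix S assume "S \<in> A"
    show "ycon w S * dc S T = 0"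
    proof (rule ccontr)
      assume "ycon w S * dc S T \<noteq> 0"
      then have nz: "ycon w S \<noteq> 0" "dc S T \<noteq> 0" by auto
      then have e'S: "e' \<in> fst S" using ycon0 by blast
      obtain a where "succ_state V ends S a = Some T" using dcoef_nz[OF nz(2)] by blast
      then have "fst T = insert a (fst S)" by (rule succ_fst)
      then show False using e'S e'T by simp
    qed
  qed
  moreover have "w T = 0" using w0 e'T by blast
  ultimately show ?thesis using TA unfolding diff_def by simp
qed

lemma acyc_eT:
  assumes TA: "T \<in> A" and e'T: "e' \<in> fst T" and eT: "e \<in> fst T"
  shows "D (ycon w) T = w T"
proof -
  have DyT: "D (ycon w) T = (\<Sum>S\<in>A. ycon w S * dc S T)" unfolding diff_def using TA by simp
  define T0 where "T0 = (fst T - {e}, snd T)"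
  have e'T0: "e' \<in> fst T0" using e'T ee unfolding T0_def by auto
  have eT0: "e \<notin> fst T0" unfolding T0_def by simp
  have fT: "fst T = insert e (fst T0)" using eT unfolding T0_def by auto
  have Tc: "snd T \<subseteq> comps V ends (fst T)" using TA A_iff by blast
  have cT: "comps V ends (fst T) = comps V ends (fst T0)" using fT comps_par e'T0 by simp
  have T0A: "T0 \<in> A" using TA P2[OF e'T0] fT cT unfolding A_iff T0_def by auto
  have sT0: "succ_state V ends T0 e = Some T"
    unfolding succ_state_eq using fT[symmetric] notbad_same[OF Tc] lift_same[OF Tc]
    unfolding T0_def by simp
  have dT0: "dc T0 T = esgn (fst T0) e" using dcoef_some[OF finE _ sT0] eE eT0 by simp
  have gT0: "addE e T0 = T" unfolding addE_def using fT T0_def by simp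
  have "(\<Sum>S\<in>A. ycon w S * dc S T) = (\<Sum>S\<in>{T0}. ycon w S * dc S T)"
  proof (rule sum.mono_neutral_right[OF finA])
    show "{T0} \<subseteq> A" using T0A by simp
    show "\<forall>S\<in>A - {T0}. ycon w S * dc S T = 0"
    proof
      fix S assume S: "S \<in> A - {T0}"
      show "ycon w S * dc S T = 0"
      proof (rule ccontr)
        assume "ycon w S * dc S T \<noteq> 0"
        then have nz: "ycon w S \<noteq> 0" "dc S T \<noteq> 0" by auto
        then have eS: "e \<notin> fst S" unfolding ycon_def by (auto split: if_splits)
        obtain a where a: "a \<in> E - fst S" "succ_state V ends S a = Some T" using dcoef_nz[OF nz(2)] by blast
        have fa: "fst T = insert a (fst S)" using succ_fst[OF a(2)] .
        then have "a = e" using eT eS by auto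
        then have f1: "fst S = fst T0" using fa a(1) unfolding T0_def by auto
        have Sc: "snd S \<subseteq> comps V ends (fst T)" using S A_iff f1 cT by auto
        have "snd T = snd S" using succ_snd[OF a(2)] fa lift_same[OF Sc] by simp
        then have "S = T0" using f1 unfolding T0_def by (simp add: prod_eq_iff)
        then show False using S by simp
      qed
    qed
  qed
  also have "\<dots> = esgn (fst T0) e * w T * esgn (fst T0) e"
    using T0A e'T0 eT0 gT0 dT0 unfolding ycon_def by simp
  also have "\<dots> = w T" using esgn_sq[of "fst T0" e] by (simp add: algebra_simps)
  finally show ?thesis using DyT by simp
qed

lemma acyc_neT:
  assumes w0: "\<forall>S. e' \<notin> fst S \<longrightarrow> w S = 0" and Dw: "D w = (\<lambda>S. 0)"
    and TA: "T \<in> A" and e'T: "e' \<in> fst T" and eT: "e \<notin> fst T"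
  shows "D (ycon w) T = w T"
proof -
  have DyT: "D (ycon w) T = (\<Sum>S\<in>A. ycon w S * dc S T)" unfolding diff_def using TA by simp
  define Te where "Te = addE e T"
  have Tc: "snd T \<subseteq> comps V ends (fst T)" using TA A_iff by blast
  have TeA: "Te \<in> A" unfolding Te_def using gA TA e'T .
  have Tc': "snd T \<subseteq> comps V ends (insert e (fst T))" using Tc comps_par[OF e'T] by simp
  have sTe: "succ_state V ends T e = Some Te"
    unfolding succ_state_eq Te_def addE_def using notbad_same[OF Tc'] lift_same[OF Tc']
    by simp
  define c where "c = esgn (fst T) e"
  have dTe: "dc T Te = c" using dcoef_some[OF finE _ sTe] eE eT unfolding c_def by simp
  have "D w Te = 0" using Dw by simp
  then have sum0: "(\<Sum>S\<in>A. w S * dc S Te) = 0" unfolding diff_def using TeA by simp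
  have "(\<Sum>S\<in>A. w S * dc S Te) = w T * dc T Te + (\<Sum>S\<in>A - {T}. w S * dc S Te)"
    using sum.remove[OF finA TA] .
  then have rest: "(\<Sum>S\<in>A - {T}. w S * dc S Te) = - (w T * c)" using sum0 dTe by simp
  define NZ1 where "NZ1 = {S \<in> A. ycon w S * dc S T \<noteq> 0}"
  define NZ2 where "NZ2 = {S \<in> A - {T}. w S * dc S Te \<noteq> 0}"
  have s1: "(\<Sum>S\<in>A. ycon w S * dc S T) = (\<Sum>S\<in>NZ1. ycon w S * dc S T)"
    unfolding NZ1_def by (rule sum.mono_neutral_right[OF finA]) auto
  have s2: "(\<Sum>S\<in>A - {T}. w S * dc S Te) = (\<Sum>S\<in>NZ2. w S * dc S Te)"
    unfolding NZ2_def by (rule sum.mono_neutral_right) (use finA in auto)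
  have nz1: "S \<in> A \<and> e' \<in> fst S \<and> e \<notin> fst S \<and> w (addE e S) \<noteq> 0 \<and>
      (\<exists>a. a \<in> E - fst S \<and> a \<noteq> e \<and> succ_state V ends S a = Some T)" if "S \<in> NZ1" for S
  proof -
    have nz: "S \<in> A" "ycon w S \<noteq> 0" "dc S T \<noteq> 0" using that unfolding NZ1_def by auto
    then have p: "e' \<in> fst S" "e \<notin> fst S" "w (addE e S) \<noteq> 0" unfolding ycon_def by (auto split: if_splits)
    obtain a where a: "a \<in> E - fst S" "succ_state V ends S a = Some T" using dcoef_nz[OF nz(3)] by blast
    have "a \<noteq> e" using succ_fst[OF a(2)] eT by auto
    then show ?thesis using nz p a by blast
  qed
  have sg: "succ_state V ends (addE e S) a = Some Te \<and> dc (addE e S) Te = esgn (insert e (fst S)) a"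
    if "S \<in> A" "e' \<in> fst S" "e \<notin> fst S" "a \<in> E - fst S" "a \<noteq> e" "succ_state V ends S a = Some T" for S a
  proof -
    have "succ_state V ends (addE e S) a = Some Te"
      using succ_par'[OF that(2), of "snd S" a T] that(6) unfolding addE_def Te_def by simp
    moreover have "dc (addE e S) Te = esgn (insert e (fst S)) a"
      using dcoef_some[OF finE _ calculation] that(4,5) unfolding addE_def by simp
    ultimately show ?thesis by simp
  qed
  have inj: "inj_on (addE e) NZ1"
  proof (rule inj_onI)
    fix S1 S2 assume "S1 \<in> NZ1" "S2 \<in> NZ1" "addE e S1 = addE e S2"
    then have "e \<notin> fst S1" "e \<notin> fst S2" "insert e (fst S1) = insert e (fst S2)" "snd S1 = snd S2"
      using nz1 unfolding addE_def by auto
    then have "fst S1 = fst S2" by (metis Diff_insert_absorb)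
    then show "S1 = S2" using \<open>snd S1 = snd S2\<close> by (simp add: prod_eq_iff)
  qed
  have img1: "addE e ` NZ1 \<subseteq> NZ2"
  proof
    fix S' assume "S' \<in> addE e ` NZ1"
    then obtain S where S: "S \<in> NZ1" "S' = addE e S" by blast
    obtain a where a: "a \<in> E - fst S" "a \<noteq> e" "succ_state V ends S a = Some T" using nz1[OF S(1)] by blast
    have p: "S \<in> A" "e' \<in> fst S" "e \<notin> fst S" "w (addE e S) \<noteq> 0" using nz1[OF S(1)] by auto
    have d: "dc (addE e S) Te = esgn (insert e (fst S)) a" using sg[OF p(1,2,3) a] by blast
    have ne: "addE e S \<noteq> T" using eT unfolding addE_def by auto
    have "esgn (insert e (fst S)) a \<noteq> 0" unfolding esgn_def by simp
    then show "S' \<in> NZ2" unfolding NZ2_def using S(2) gA[OF p(1,2)] p(4) d ne by simp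
  qed
  have img2: "NZ2 \<subseteq> addE e ` NZ1"
  proof
    fix S assume S: "S \<in> NZ2"
    then have nz: "S \<in> A" "S \<noteq> T" "w S \<noteq> 0" "dc S Te \<noteq> 0" unfolding NZ2_def by auto
    have e'S: "e' \<in> fst S" using w0 nz(3) by blast
    obtain a where a: "a \<in> E - fst S" "succ_state V ends S a = Some Te" using dcoef_nz[OF nz(4)] by blast
    have fa: "fst Te = insert a (fst S)" using succ_fst[OF a(2)] .
    have Sc: "snd S \<subseteq> comps V ends (fst S)" using nz(1) A_iff by blast
    have ae: "a \<noteq> e"
    proof
      assume ae: "a = e"
      then have f1: "fst S = fst T" using fa eT a(1) unfolding Te_def addE_def by auto
      have Sc': "snd S \<subseteq> comps V ends (insert e (fst S))" using Sc comps_par[OF e'S] by simp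
      have "snd Te = snd S" using succ_snd[OF a(2)] ae lift_same[OF Sc'] by simp
      then have "S = T" using f1 unfolding Te_def addE_def by (simp add: prod_eq_iff)
      then show False using nz(2) by simp
    qed
    have eS: "e \<in> fst S" using fa ae unfolding Te_def addE_def by auto
    define S0 where "S0 = (fst S - {e}, snd S)"
    have fS: "fst S = insert e (fst S0)" using eS unfolding S0_def by auto
    have e'S0: "e' \<in> fst S0" using e'S ee unfolding S0_def by auto
    have eS0: "e \<notin> fst S0" unfolding S0_def by simp
    have gS0: "addE e S0 = S" unfolding addE_def using fS S0_def by simp
    have cS: "comps V ends (fst S) = comps V ends (fst S0)" using fS comps_par e'S0 by simp
    have S0A: "S0 \<in> A" using nz(1) P2[OF e'S0] fS cS unfolding A_iff S0_def by auto
    have "succ_state V ends (insert e (fst S0), snd S0) a =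
        map_option (\<lambda>T. (insert e (fst T), snd T)) (succ_state V ends (fst S0, snd S0) a)"
      by (rule succ_par[OF e'S0])
    then have "map_option (\<lambda>T. (insert e (fst T), snd T)) (succ_state V ends S0 a) = Some Te"
      using a(2) gS0 unfolding addE_def by simp
    then obtain T' where T': "succ_state V ends S0 a = Some T'" "(insert e (fst T'), snd T') = Te" by auto
    have "fst T' = insert a (fst S0)" using succ_fst[OF T'(1)] .
    then have eT': "e \<notin> fst T'" using ae eS0 by simp
    have "insert e (fst T') = insert e (fst T)" using T'(2) unfolding Te_def addE_def by (simp add: prod_eq_iff)
    then have "fst T' = fst T" using eT' eT by (metis Diff_insert_absorb)
    moreover have "snd T' = snd T" using T'(2) unfolding Te_def addE_def by auto
    ultimately have T'T: "T' = T" by (simp add: prod_eq_iff)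
    have aS0: "a \<in> E - fst S0" using a(1) ae unfolding S0_def by auto
    have "dc S0 T = esgn (fst S0) a" using dcoef_some[OF finE aS0] T'(1) T'T by simp
    moreover have "ycon w S0 = esgn (fst S0) e * w S" using S0A e'S0 eS0 gS0 unfolding ycon_def by simp
    moreover have "esgn (fst S0) a \<noteq> 0" "esgn (fst S0) e \<noteq> 0" unfolding esgn_def by simp_all
    ultimately have "S0 \<in> NZ1" unfolding NZ1_def using S0A nz(3) by simp
    then show "S \<in> addE e ` NZ1" using gS0 by blast
  qed
  have trm: "ycon w S * dc S T = - c * (w (addE e S) * dc (addE e S) Te)" if Sn: "S \<in> NZ1" for S
  proof -
    obtain a where a: "a \<in> E - fst S" "a \<noteq> e" "succ_state V ends S a = Some T" using nz1[OF Sn] by blast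
    have p: "S \<in> A" "e' \<in> fst S" "e \<notin> fst S" using nz1[OF Sn] by auto
    have d1: "dc (addE e S) Te = esgn (insert e (fst S)) a" using sg[OF p a] by blast
    have d2: "dc S T = esgn (fst S) a" using dcoef_some[OF finE a(1) a(3)] .
    have fT: "fst T = insert a (fst S)" using succ_fst[OF a(3)] .
    have rel: "esgn (fst S) e * esgn (fst S) a = - (esgn (insert a (fst S)) e * esgn (insert e (fst S)) a)"
      using sgn_rel[OF finS[OF p(1)] _ p(3) a(2)] a(1) by simp
    have "ycon w S * dc S T = w (addE e S) * (esgn (fst S) e * esgn (fst S) a)" using p d2 unfolding ycon_def by simp
    also have "\<dots> = - c * (w (addE e S) * dc (addE e S) Te)" unfolding rel d1 c_def fT by simp
    finally show ?thesis .
  qed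
  have "D (ycon w) T = (\<Sum>S\<in>NZ1. - c * (w (addE e S) * dc (addE e S) Te))" using DyT s1 trm by simp
  also have "\<dots> = - c * (\<Sum>S\<in>NZ1. w (addE e S) * dc (addE e S) Te)" by (simp add: sum_distrib_left)
  also have "(\<Sum>S\<in>NZ1. w (addE e S) * dc (addE e S) Te) = (\<Sum>S\<in>NZ2. w S * dc S Te)"
    using sum.reindex[OF inj, of "\<lambda>S. w S * dc S Te"] img1 img2 by simp
  also have "- c * \<dots> = c * c * w T"
  proof -
    have "(\<Sum>S\<in>NZ2. w S * dc S Te) = - (w T * c)" using s2 rest by simp
    then show ?thesis by (simp add: algebra_simps)
  qed
  also have "\<dots> = w T" unfolding c_def esgn_sq by simp
  finally show ?thesis .
qed

lemma acyclic:
  assumes w: "w \<in> cochains V E ends P i j" and w0: "\<forall>S. e' \<notin> fst S \<longrightarrow> w S = 0"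
    and Dw: "D w = (\<lambda>S. 0)"
  shows "\<exists>y\<in>cochains V E ends P (i - 1) j. (\<forall>S. e' \<notin> fst S \<longrightarrow> y S = 0) \<and> D y = w"
proof -
  have "D (ycon w) = w"
  proof
    fix T show "D (ycon w) T = w T"
    proof (cases "T \<in> A")
      case False then show ?thesis using acyc_notA[OF w] by blast
    next
      case True
      show ?thesis
      proof (cases "e' \<in> fst T")
        case False then show ?thesis using acyc_note'[OF w0 True] by blast
      next
        case e'T: True
        show ?thesis
        proof (cases "e \<in> fst T")
          case eT: True then show ?thesis using acyc_eT[OF True e'T] by blast
        next
          case eT: False then show ?thesis using acyc_neT[OF w0 Dw True e'T] by blast
        qed
      qed
    qed
  qed
  then show ?thesis using ycon_c[OF w] ycon0 by blast
qed

end


lemma circuit_two: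
  assumes c: "is_circuit ends es vs" and i: "i < length es" and k: "k < length es" and ik: "i \<noteq> k"
    and eq: "ends (es ! i) = ends (es ! k)"
  shows "length es = 2"
proof (rule ccontr)
  let ?n = "length es"
  assume n2: "?n \<noteq> 2"
  have n3: "?n \<ge> 3" using i k ik n2 by linarith
  have lv: "length vs = ?n" and dv: "distinct vs" and ed: "\<forall>m < ?n. ends (es ! m) = {vs ! m, vs ! ((m + 1) mod ?n)}"
    using c unfolding is_circuit_def by auto
  have n0: "0 < ?n" using n3 by linarith
  have i1: "(i + 1) mod ?n < ?n" by (rule mod_less_divisor[OF n0])
  have k1: "(k + 1) mod ?n < ?n" by (rule mod_less_divisor[OF n0])
  have E: "{vs ! i, vs ! ((i + 1) mod ?n)} = {vs ! k, vs ! ((k + 1) mod ?n)}" using ed i k eq by metis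
  have vi: "vs ! i \<noteq> vs ! k" using nth_eq_iff_index_eq[OF dv] i k ik lv by simp
  then have "vs ! i = vs ! ((k + 1) mod ?n)" using E by blast
  then have a: "i = (k + 1) mod ?n" using nth_eq_iff_index_eq[OF dv] i k1 lv by simp
  have "vs ! k \<in> {vs ! i, vs ! ((i + 1) mod ?n)}" unfolding E by simp
  then have "vs ! k = vs ! ((i + 1) mod ?n)" using vi by auto
  then have b: "k = (i + 1) mod ?n" using nth_eq_iff_index_eq[OF dv] k i1 lv by simp
  show False
  proof (cases "k + 1 < ?n")
    case True
    then have ik1: "i = k + 1" using a by (simp only: mod_less)
    have i2: "i + 1 = k + 2" using ik1 by simp
    have b': "k = (k + 2) mod ?n" using b unfolding i2 .
    show False
    proof (cases "k + 2 < ?n")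
      case True
      then have "(k + 2) mod ?n = k + 2" by (rule mod_less)
      then show False using b' by linarith
    next
      case False
      then have "k + 2 = ?n" using True by linarith
      then have "(k + 2) mod ?n = 0" by simp
      then have "k = 0" using b' by linarith
      then show False using \<open>k + 2 = ?n\<close> n3 by linarith
    qed
  next
    case False
    then have kn: "k + 1 = ?n" using k by linarith
    then have "(k + 1) mod ?n = 0" by simp
    then have "i = 0" using a by linarith
    then have "(i + 1) mod ?n = 1" using n3 by simp
    then have "k = 1" using b by linarith
    then show False using kn n3 by linarith
  qed
qed

lemma neg_circuit_par:
  assumes sig: "sigma e = sigma e'" "sigma e = 1 \<or> sigma e = -1"
    and ends_eq: "ends e = ends e'" and ee: "e \<noteq> e'" and e's: "e' \<in> s"
  shows "neg_circuit_in ends sigma (insert e s) K \<longleftrightarrow> neg_circuit_in ends sigma s K"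
proof
  assume "neg_circuit_in ends sigma s K"
  then show "neg_circuit_in ends sigma (insert e s) K" unfolding neg_circuit_in_def by blast
next
  assume "neg_circuit_in ends sigma (insert e s) K"
  then obtain es vs where c: "is_circuit ends es vs" "set es \<subseteq> insert e s" "set vs \<subseteq> K"
    "prod_list (map sigma es) = -1" unfolding neg_circuit_in_def by blast
  have des: "distinct es" using c(1) unfolding is_circuit_def by simp
  show "neg_circuit_in ends sigma s K"
  proof (cases "e \<in> set es")
    case False
    then have "set es \<subseteq> s" using c(2) by blast
    then show ?thesis unfolding neg_circuit_in_def using c by blast
  next
    case True
    then obtain k where k: "k < length es" "es ! k = e" by (auto simp: in_set_conv_nth)
    show ?thesis
    proof (cases "e' \<in> set es")
      case True
      then obtain i where i: "i < length es" "es ! i = e'" by (auto simp: in_set_conv_nth)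
      have ik: "i \<noteq> k" using i k ee by auto
      have l2: "length es = 2" using circuit_two[OF c(1) i(1) k(1) ik] i k ends_eq by simp
      have es2: "es = [es ! 0, es ! 1]" using l2 by (simp add: list_eq_iff_nth_eq less_2_cases_iff)
      have "(i = 0 \<and> k = 1) \<or> (i = 1 \<and> k = 0)" using i k ik l2 by auto
      then have "sigma (es ! 0) * sigma (es ! 1) = sigma e * sigma e" using i(2) k(2) sig(1) by auto
      moreover have "prod_list (map sigma es) = sigma (es ! 0) * sigma (es ! 1)"
        by (subst es2) simp
      ultimately have "prod_list (map sigma es) = sigma e * sigma e" by simp
      also have "\<dots> = 1" using sig(2) by auto
      finally show ?thesis using c(4) by simp
    next
      case False
      let ?es = "es[k := e']"
      have c2: "is_circuit ends ?es vs"
        using c(1) k ends_eq unfolding is_circuit_def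
        by (auto simp: nth_list_update distinct_list_update False)
      have "set ?es = insert e' (set es - {e})" using set_update_distinct[OF des k(1)] k(2) by simp
      then have "set ?es \<subseteq> s" using c(2) e's by auto
      moreover have "map sigma ?es = map sigma es"
        unfolding map_update using k sig(1) by (metis list_update_id nth_map)
      ultimately show ?thesis unfolding neg_circuit_in_def using c2 c(3,4) by metis
    qed
  qed
qed



context par begin

sublocale c2: cx V "E - {e'}" ends P
proof
  show "finite V" by (rule finV)
  show "finite (E - {e'})" using finE by simp
qed (rule P1)

definition Phi :: "('b set \<times> 'a set set \<Rightarrow> int) \<Rightarrow> ('b set \<times> 'a set set \<Rightarrow> int)" where
  "Phi f = (\<lambda>S. if e' \<in> fst S then 0 else f S)"

lemma A'_iff: "S \<in> adm_states V (E - {e'}) ends P \<longleftrightarrow> S \<in> A \<and> e' \<notin> fst S"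
  unfolding adm_states_def states_def by auto

lemma basis'_iff: "S \<in> basis V (E - {e'}) ends P i j \<longleftrightarrow> S \<in> basis V E ends P i j \<and> e' \<notin> fst S"
  unfolding basis_def using A'_iff by auto

lemma cochains'_iff: "f \<in> cochains V (E - {e'}) ends P i j \<longleftrightarrow>
    f \<in> cochains V E ends P i j \<and> (\<forall>S. e' \<in> fst S \<longrightarrow> f S = 0)"
  unfolding cochains_def using basis'_iff by blast

lemma Phi_cochains: "f \<in> cochains V E ends P i j \<Longrightarrow> Phi f \<in> cochains V (E - {e'}) ends P i j"
  unfolding cochains'_iff unfolding cochains_def Phi_def by auto

lemma Phi_id: "f \<in> cochains V (E - {e'}) ends P i j \<Longrightarrow> Phi f = f"
  unfolding cochains'_iff Phi_def by auto

lemma dc_fst: "dc S T \<noteq> 0 \<Longrightarrow> fst S \<subseteq> fst T"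
proof -
  assume "dc S T \<noteq> 0"
  then obtain a where "succ_state V ends S a = Some T" using dcoef_nz by blast
  then show ?thesis using succ_fst by fastforce
qed

lemma dc'_eq:
  assumes "e' \<notin> fst T"
  shows "dcoef V (E - {e'}) ends S T = dc S T"
proof -
  have "dcoef V (E - {e'}) ends S T = (\<Sum>a\<in>E - {e'} - fst S.
      if succ_state V ends S a = Some T then (-1) ^ card {b \<in> fst S. b < a} else 0)"
    unfolding dcoef_def ..
  also have "\<dots> = (\<Sum>a\<in>E - fst S.
      if succ_state V ends S a = Some T then (-1) ^ card {b \<in> fst S. b < a} else 0)"
  proof (rule sum.mono_neutral_left)
    show "finite (E - fst S)" using finE by simp
    show "E - {e'} - fst S \<subseteq> E - fst S" by blast
    show "\<forall>i\<in>E - fst S - (E - {e'} - fst S).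
       (if succ_state V ends S i = Some T then (- 1) ^ card {b \<in> fst S. b < i} else 0) = (0::int)"
    proof
      fix a assume "a \<in> E - fst S - (E - {e'} - fst S)"
      then have "a = e'" by blast
      then show "(if succ_state V ends S a = Some T then (- 1) ^ card {b \<in> fst S. b < a} else 0) = (0::int)"
        using succ_fst assms by fastforce
    qed
  qed
  also have "\<dots> = dc S T" unfolding dcoef_def ..
  finally show ?thesis .
qed

lemma Phi_chain: "diff V (E - {e'}) ends P (Phi f) = Phi (D f)"
proof
  fix T
  show "diff V (E - {e'}) ends P (Phi f) T = Phi (D f) T"
  proof (cases "T \<in> adm_states V (E - {e'}) ends P")
    case False
    then show ?thesis unfolding diff_def Phi_def using A'_iff by auto
  next
    case True
    then have TA: "T \<in> A" and e'T: "e' \<notin> fst T" using A'_iff by auto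
    have "diff V (E - {e'}) ends P (Phi f) T =
        (\<Sum>S\<in>adm_states V (E - {e'}) ends P. Phi f S * dcoef V (E - {e'}) ends S T)"
      unfolding diff_def using True by simp
    also have "\<dots> = (\<Sum>S\<in>adm_states V (E - {e'}) ends P. f S * dc S T)"
      by (rule sum.cong) (auto simp: Phi_def dc'_eq[OF e'T] A'_iff)
    also have "\<dots> = (\<Sum>S\<in>A. f S * dc S T)"
    proof (rule sum.mono_neutral_left[OF finA])
      show "adm_states V (E - {e'}) ends P \<subseteq> A" using A'_iff by blast
      show "\<forall>S\<in>A - adm_states V (E - {e'}) ends P. f S * dc S T = 0"
      proof
        fix S assume "S \<in> A - adm_states V (E - {e'}) ends P"
        then have "e' \<in> fst S" using A'_iff by blast
        then have "dc S T = 0" using dc_fst e'T by blast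
        then show "f S * dc S T = 0" by simp
      qed
    qed
    also have "\<dots> = Phi (D f) T" unfolding Phi_def diff_def using TA e'T by simp
    finally show ?thesis .
  qed
qed

lemma Phi_add: "Phi (\<lambda>S. f S + g S) = (\<lambda>S. Phi f S + Phi g S)"
  unfolding Phi_def by auto

abbreviation "Z' i j \<equiv> c2.Zg i j"
abbreviation "B' i j \<equiv> coboundaries V (E - {e'}) ends P i j"

lemma Phi_hom: "Phi \<in> hom (Zg i j) (Z' i j)"
proof (rule homI)
  fix x assume "x \<in> carrier (Zg i j)"
  then have x: "x \<in> cochains V E ends P i j" "D x = (\<lambda>S. 0)" unfolding cocycles_def by auto
  have "diff V (E - {e'}) ends P (Phi x) = Phi (D x)" by (rule Phi_chain)
  also have "\<dots> = (\<lambda>S. 0)" unfolding x(2) Phi_def by simp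
  finally have "diff V (E - {e'}) ends P (Phi x) = (\<lambda>S. 0)" .
  then show "Phi x \<in> carrier (Z' i j)" using Phi_cochains[OF x(1)] unfolding cocycles_def by simp
next
  fix x y show "Phi (x \<otimes>\<^bsub>Zg i j\<^esub> y) = Phi x \<otimes>\<^bsub>Z' i j\<^esub> Phi y" by (simp add: Phi_add)
qed

lemma Phi_zero: "(\<forall>S. e' \<notin> fst S \<longrightarrow> f S = 0) \<longleftrightarrow> Phi f = (\<lambda>S. 0)"
  unfolding Phi_def by (auto simp: fun_eq_iff)

lemma surj_lift:
  assumes z': "z' \<in> cocycles V (E - {e'}) ends P i j"
  shows "\<exists>z\<in>cocycles V E ends P i j. Phi z = z'"
proof -
  have z'c: "z' \<in> cochains V (E - {e'}) ends P i j" and Dz': "diff V (E - {e'}) ends P z' = (\<lambda>S. 0)"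
    using z' unfolding cocycles_def by auto
  have zc: "z' \<in> cochains V E ends P i j" using z'c cochains'_iff by blast
  define w where "w = D z'"
  have wc: "w \<in> cochains V E ends P (i + 1) j" unfolding w_def by (rule D_cochains) (use zc in simp)
  have "Phi w = diff V (E - {e'}) ends P (Phi z')" unfolding w_def Phi_chain ..
  also have "\<dots> = (\<lambda>S. 0)" using Phi_id[OF z'c] Dz' by simp
  finally have w0: "\<forall>S. e' \<notin> fst S \<longrightarrow> w S = 0" using Phi_zero by blast
  have Dw: "D w = (\<lambda>S. 0)" unfolding w_def by (rule DD)
  obtain y where y: "y \<in> cochains V E ends P (i + 1 - 1) j" "\<forall>S. e' \<notin> fst S \<longrightarrow> y S = 0" "D y = w"
    using acyclic[OF wc w0 Dw] by blast
  define z where "z = (\<lambda>S. z' S - y S)"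
  have "z \<in> cochains V E ends P i j" unfolding z_def using cochains_add[OF zc cochains_neg[of y]] y(1) by simp
  moreover have "D z = (\<lambda>S. 0)" unfolding z_def D_diff y(3) w_def by simp
  moreover have "Phi z = z'"
  proof -
    have "Phi y = (\<lambda>S. 0)" using y(2) Phi_zero by blast
    then show ?thesis using Phi_id[OF z'c] unfolding z_def Phi_def by (auto simp: fun_eq_iff split: if_splits)
  qed
  ultimately show ?thesis unfolding cocycles_def by blast
qed

lemma ker_char:
  assumes z: "z \<in> cocycles V E ends P i j"
  shows "Phi z \<in> B' i j \<longleftrightarrow> z \<in> coboundaries V E ends P i j"
proof
  assume "z \<in> coboundaries V E ends P i j"
  then obtain f where f: "f \<in> cochains V E ends P (i - 1) j" "z = D f" unfolding coboundaries_def by blast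
  have "Phi z = diff V (E - {e'}) ends P (Phi f)" unfolding f(2) Phi_chain ..
  then show "Phi z \<in> B' i j" unfolding coboundaries_def using Phi_cochains[OF f(1)] by blast
next
  assume "Phi z \<in> B' i j"
  then obtain f' where f': "f' \<in> cochains V (E - {e'}) ends P (i - 1) j" "Phi z = diff V (E - {e'}) ends P f'"
    unfolding coboundaries_def by blast
  have zc: "z \<in> cochains V E ends P i j" and Dz: "D z = (\<lambda>S. 0)" using z unfolding cocycles_def by auto
  have fc: "f' \<in> cochains V E ends P (i - 1) j" using f'(1) cochains'_iff by blast
  define u where "u = D f'"
  have uc: "u \<in> cochains V E ends P i j" unfolding u_def by (rule D_cochains[OF fc])
  have "Phi u = diff V (E - {e'}) ends P (Phi f')" unfolding u_def Phi_chain ..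
  also have "\<dots> = Phi z" using Phi_id[OF f'(1)] f'(2) by simp
  finally have Pu: "Phi u = Phi z" .
  define w where "w = (\<lambda>S. z S - u S)"
  have wc: "w \<in> cochains V E ends P i j" unfolding w_def using cochains_add[OF zc cochains_neg[OF uc]] by simp
  have "Phi w = (\<lambda>S. 0)"
  proof
    fix S
    have "Phi u S = Phi z S" using Pu by simp
    then show "Phi w S = 0" unfolding w_def Phi_def by (auto split: if_splits)
  qed
  then have w0: "\<forall>S. e' \<notin> fst S \<longrightarrow> w S = 0" using Phi_zero by blast
  have Dw: "D w = (\<lambda>S. 0)" unfolding w_def D_diff Dz u_def DD by simp
  obtain y where y: "y \<in> cochains V E ends P (i - 1) j" "D y = w" using acyclic[OF wc w0 Dw] by blast
  have "z = D (\<lambda>S. f' S + y S)" unfolding D_add y(2) w_def u_def by simp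
  then show "z \<in> coboundaries V E ends P i j" unfolding coboundaries_def using cochains_add[OF fc y(1)] by blast
qed

theorem cohom_iso: "cohom V E ends P i j \<cong> cohom V (E - {e'}) ends P i j"
proof -
  let ?Z = "Zg i j" and ?Z' = "Z' i j" and ?Q = "Z' i j Mod B' i j"
  interpret Zc: comm_group ?Z by (rule Zg_comm[of i j])
  interpret Z'c: comm_group ?Z' by (rule c2.Zg_comm[of i j])
  interpret N': normal "B' i j" ?Z' by (rule c2.B_normal[of i j])
  have Qg: "group ?Q" by (rule N'.factorgroup_is_group)
  define h where "h = (\<lambda>a. B' i j #>\<^bsub>?Z'\<^esub> a) \<circ> Phi"
  have hh: "h \<in> hom ?Z ?Q" unfolding h_def by (rule hom_compose[OF Phi_hom[of i j] N'.r_coset_hom_Mod])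
  interpret gh: group_hom ?Z ?Q h
    by (rule group_hom.intro[OF Zc.is_group Qg]) (rule group_hom_axioms.intro[OF hh])
  have onto: "h ` carrier ?Z = carrier ?Q"
  proof
    show "h ` carrier ?Z \<subseteq> carrier ?Q" using hh unfolding hom_def Pi_def by blast
    show "carrier ?Q \<subseteq> h ` carrier ?Z"
    proof
      fix C assume "C \<in> carrier ?Q"
      then obtain z' where z': "z' \<in> carrier ?Z'" "C = B' i j #>\<^bsub>?Z'\<^esub> z'"
        unfolding carrier_FactGroup by blast
      have "z' \<in> cocycles V (E - {e'}) ends P i j" using z'(1) by simp
      then obtain z where z: "z \<in> cocycles V E ends P i j" "Phi z = z'" using surj_lift by blast
      have "h z = C" unfolding h_def using z(2) z'(2) by simp
      moreover have "z \<in> carrier ?Z" using z(1) by simp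
      ultimately show "C \<in> h ` carrier ?Z" by blast
    qed
  qed
  have ker: "kernel ?Z ?Q h = coboundaries V E ends P i j"
  proof
    show "kernel ?Z ?Q h \<subseteq> coboundaries V E ends P i j"
    proof
      fix z assume "z \<in> kernel ?Z ?Q h"
      then have z: "z \<in> cocycles V E ends P i j" "B' i j #>\<^bsub>?Z'\<^esub> Phi z = B' i j"
        unfolding kernel_def h_def by auto
      have Pz: "Phi z \<in> carrier ?Z'" using Phi_hom z(1) unfolding hom_def by auto
      have "Phi z = \<one>\<^bsub>?Z'\<^esub> \<otimes>\<^bsub>?Z'\<^esub> Phi z" using Pz by simp
      moreover have "\<one>\<^bsub>?Z'\<^esub> \<in> B' i j" by (rule N'.one_closed)
      ultimately have "Phi z \<in> B' i j #>\<^bsub>?Z'\<^esub> Phi z" unfolding r_coset_def by blast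
      then have "Phi z \<in> B' i j" using z(2) by simp
      then show "z \<in> coboundaries V E ends P i j" using ker_char[OF z(1)] by blast
    qed
    show "coboundaries V E ends P i j \<subseteq> kernel ?Z ?Q h"
    proof
      fix z assume zb: "z \<in> coboundaries V E ends P i j"
      then have z: "z \<in> cocycles V E ends P i j" using B_sub by blast
      then have "Phi z \<in> B' i j" using ker_char zb by blast
      then have "B' i j #>\<^bsub>?Z'\<^esub> Phi z = B' i j" by (rule N'.rcos_const[OF Z'c.is_group])
      then show "z \<in> kernel ?Z ?Q h" unfolding kernel_def h_def using z by simp
    qed
  qed
  have "?Z Mod kernel ?Z ?Q h \<cong> ?Q" by (rule gh.FactGroup_iso[OF onto])
  then show ?thesis unfolding cohom_def ker .
qed

end



lemma neg_mono: "neg_circuit_in ends sigma s K \<Longrightarrow> s \<subseteq> s' \<Longrightarrow> K \<subseteq> K' \<Longrightarrow> neg_circuit_in ends sigma s' K'"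
  unfolding neg_circuit_in_def by blast

lemma main_H:
  fixes V :: "'v set" and E :: "'e::linorder set" and ends :: "'e \<Rightarrow> 'v set"
    and sigma :: "'e \<Rightarrow> int" and e e' :: 'e
  assumes sg: "signed_graph V E ends sigma"
    and eE: "e \<in> E" and e'E: "e' \<in> E" and ee: "e \<noteq> e'"
    and ends_eq: "ends e = ends e'" and sig: "sigma e = sigma e'"
  shows "H V E ends sigma i j \<cong> H V (E - {e'}) ends sigma i j"
proof -
  let ?P = "\<lambda>s L. \<forall>K\<in>L. \<not> neg_circuit_in ends sigma s K"
  have fin: "finite V" "finite E" using sg unfolding signed_graph_def by auto
  have sv: "sigma e = 1 \<or> sigma e = -1" using sg eE unfolding signed_graph_def by auto
  interpret par V E ends ?P e e'
  proof unfold_locales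
    fix s L a T
    assume L: "L \<subseteq> comps V ends s" and nP: "\<not> ?P s L" and a: "a \<notin> s"
      and T: "succ_state V ends (s, L) a = Some T"
    from nP obtain K where K: "K \<in> L" "neg_circuit_in ends sigma s K" by auto
    have Kc: "K \<in> comps V ends s" using K(1) L by (rule rev_subsetD)
    obtain K' where K': "K' \<in> comps V ends (insert a s)" "K \<subseteq> K'"
      using comps_refine[OF Kc subset_insertI] by blast
    have "K' \<in> lift V ends (insert a s) L" unfolding lift_def using K' K(1) by blast
    then have "K' \<in> snd T" using succ_snd[OF T] by simp
    moreover have "neg_circuit_in ends sigma (fst T) K'"
      by (rule neg_mono[OF K(2) _ K'(2)]) (simp add: succ_fst[OF T] subset_insertI)
    ultimately show "\<not> ?P (fst T) (snd T)" by blast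
  next
    fix s L assume "e' \<in> s"
    then show "?P (insert e s) L = ?P s L"
      using neg_circuit_par[OF sig sv ends_eq ee] by simp
  qed (use fin eE e'E ee ends_eq in auto)
  show ?thesis unfolding H_def by (rule cohom_iso)
qed

lemma main_Hb:
  fixes V :: "'v set" and E :: "'e::linorder set" and ends :: "'e \<Rightarrow> 'v set"
    and sigma :: "'e \<Rightarrow> int" and e e' :: 'e
  assumes sg: "signed_graph V E ends sigma"
    and eE: "e \<in> E" and e'E: "e' \<in> E" and ee: "e \<noteq> e'"
    and ends_eq: "ends e = ends e'" and sig: "sigma e = sigma e'"
  shows "Hb V E ends sigma i j \<cong> Hb V (E - {e'}) ends sigma i j"
proof -
  let ?P = "\<lambda>(s::'e set) (L::'v set set). balanced_sub ends sigma s"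
  have fin: "finite V" "finite E" using sg unfolding signed_graph_def by auto
  have sv: "sigma e = 1 \<or> sigma e = -1" using sg eE unfolding signed_graph_def by auto
  interpret par V E ends ?P e e'
  proof unfold_locales
    fix s L a T
    assume nP: "\<not> ?P s L" and T: "succ_state V ends (s, L) a = Some T"
    then have "neg_circuit_in ends sigma s UNIV" unfolding balanced_sub_def by simp
    then have "neg_circuit_in ends sigma (fst T) UNIV"
      by (rule neg_mono) (simp_all add: succ_fst[OF T] subset_insertI)
    then show "\<not> ?P (fst T) (snd T)" unfolding balanced_sub_def by simp
  next
    fix s L assume "e' \<in> s"
    then show "?P (insert e s) L = ?P s L"
      using neg_circuit_par[OF sig sv ends_eq ee] unfolding balanced_sub_def by simp
  qed (use fin eE e'E ee ends_eq in auto)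
  show ?thesis unfolding Hb_def by (rule cohom_iso)
qed

theorem proposition5p8:
  fixes V :: "'v set" and E :: "'e::linorder set" and ends :: "'e \<Rightarrow> 'v set"
    and sigma :: "'e \<Rightarrow> int" and e e' :: 'e
  assumes "signed_graph V E ends sigma"
    and "e \<in> E" and "e' \<in> E" and "e \<noteq> e'"
    and "ends e = ends e'" and "sigma e = sigma e'"
  shows "\<forall>(i::int) (j::nat).
           H V E ends sigma i j \<cong> H V (E - {e'}) ends sigma i j \<and>
           Hb V E ends sigma i j \<cong> Hb V (E - {e'}) ends sigma i j"
  using main_H[OF assms] main_Hb[OF assms] by blast


end
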